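(* Let $\mathcal{D}=\mathcal{P}_{\mathcal{D}}\cup\mathcal{L}_{\mathcal{D}}$ be a minimal dominating set of the incidence graph of an arbitrary projective plane $\Pi_q$ of order $q$ with $|\mathcal{D}|<3q-1$. Suppose there is a point $P$ such that $|[P]\cap\mathcal{L}_{\mathcal{D}}|=q$, and let $\ell$ be the unique line of $[P]\setminus\mathcal{L}_{\mathcal{D}}$. Then $\mathcal{L}_{\mathcal{D}}=[P]\setminus\{\ell\}$ and $\mathcal{P}_{\mathcal{D}}$ is the set of points of $\ell$ other than $P$; hence $|\mathcal{D}|=2q$ and $\mathcal{D}$ is stable.
   Context: A dominating set $\mathcal{D}=\mathcal{P}_{\mathcal{D}}\cup\mathcal{L}_{\mathcal{D}}$ of the incidence graph of $\Pi_q$ is a set of points $\mathcal{P}_{\mathcal{D}}$ and lines $\mathcal{L}_{\mathcal{D}}$ such that every point not in $\mathcal{P}_{\mathcal{D}}$ lies on a line of $\mathcal{L}_{\mathcal{D}}$ and every line not in $\mathcal{L}_{\mathcal{D}}$ contains a point of $\mathcal{P}_{\mathcal{D}}$; minimal means no proper subset is dominating. $\mathcal{D}$ is stable if it is minimal and there is no dominating set $\mathcal{D}'\supset\mathcal{D}$ with $|\mathcal{D}'|=|\mathcal{D}|+1$ that contains a dominating set of size less than $|\mathcal{D}|$. $[P]$ is the set of lines through the point $P$. *)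

theory Defs
  imports Main
begin

definition collinear3 :: "'p set \<Rightarrow> 'l set \<Rightarrow> ('p \<Rightarrow> 'l \<Rightarrow> bool) \<Rightarrow> 'p \<Rightarrow> 'p \<Rightarrow> 'p \<Rightarrow> bool" where
  "collinear3 Pts Lns I A B C \<longleftrightarrow> (\<exists>l\<in>Lns. I A l \<and> I B l \<and> I C l)"

definition proj_plane :: "'p set \<Rightarrow> 'l set \<Rightarrow> ('p \<Rightarrow> 'l \<Rightarrow> bool) \<Rightarrow> nat \<Rightarrow> bool" where
  "proj_plane Pts Lns I q \<longleftrightarrow>
     (\<forall>A\<in>Pts. \<forall>B\<in>Pts. A \<noteq> B \<longrightarrow> (\<exists>!l. l \<in> Lns \<and> I A l \<and> I B l)) \<and>
     (\<forall>l\<in>Lns. \<forall>m\<in>Lns. l \<noteq> m \<longrightarrow> (\<exists>!A. A \<in> Pts \<and> I A l \<and> I A m)) \<and>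
     (\<exists>A\<in>Pts. \<exists>B\<in>Pts. \<exists>C\<in>Pts. \<exists>E\<in>Pts. distinct [A, B, C, E] \<and>
        \<not> collinear3 Pts Lns I A B C \<and> \<not> collinear3 Pts Lns I A B E \<and>
        \<not> collinear3 Pts Lns I A C E \<and> \<not> collinear3 Pts Lns I B C E) \<and>
     (\<forall>l\<in>Lns. finite {A\<in>Pts. I A l} \<and> card {A\<in>Pts. I A l} = q + 1)"

definition pencil :: "'l set \<Rightarrow> ('p \<Rightarrow> 'l \<Rightarrow> bool) \<Rightarrow> 'p \<Rightarrow> 'l set" where
  "pencil Lns I P = {l\<in>Lns. I P l}"

definition points_on :: "'p set \<Rightarrow> ('p \<Rightarrow> 'l \<Rightarrow> bool) \<Rightarrow> 'l \<Rightarrow> 'p set" where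
  "points_on Pts I l = {A\<in>Pts. I A l}"

text \<open>A set of vertices of the incidence graph is given as a pair (points, lines).\<close>
definition dominating :: "'p set \<Rightarrow> 'l set \<Rightarrow> ('p \<Rightarrow> 'l \<Rightarrow> bool) \<Rightarrow> 'p set \<Rightarrow> 'l set \<Rightarrow> bool" where
  "dominating Pts Lns I PD LD \<longleftrightarrow> PD \<subseteq> Pts \<and> LD \<subseteq> Lns \<and>
     (\<forall>A\<in>Pts - PD. \<exists>l\<in>LD. I A l) \<and> (\<forall>l\<in>Lns - LD. \<exists>A\<in>PD. I A l)"

definition minimal_dominating :: "'p set \<Rightarrow> 'l set \<Rightarrow> ('p \<Rightarrow> 'l \<Rightarrow> bool) \<Rightarrow> 'p set \<Rightarrow> 'l set \<Rightarrow> bool" where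
  "minimal_dominating Pts Lns I PD LD \<longleftrightarrow> dominating Pts Lns I PD LD \<and>
     (\<forall>PD' LD'. PD' \<subseteq> PD \<and> LD' \<subseteq> LD \<and> (PD', LD') \<noteq> (PD, LD) \<longrightarrow> \<not> dominating Pts Lns I PD' LD')"

definition dsize :: "'p set \<Rightarrow> 'l set \<Rightarrow> nat" where
  "dsize PD LD = card PD + card LD"

definition stable_dominating :: "'p set \<Rightarrow> 'l set \<Rightarrow> ('p \<Rightarrow> 'l \<Rightarrow> bool) \<Rightarrow> 'p set \<Rightarrow> 'l set \<Rightarrow> bool" where
  "stable_dominating Pts Lns I PD LD \<longleftrightarrow> minimal_dominating Pts Lns I PD LD \<and>
     \<not> (\<exists>PD' LD'. dominating Pts Lns I PD' LD' \<and> PD \<subseteq> PD' \<and> LD \<subseteq> LD' \<and> (PD', LD') \<noteq> (PD, LD) \<and>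
          dsize PD' LD' = dsize PD LD + 1 \<and>
          (\<exists>PD'' LD''. PD'' \<subseteq> PD' \<and> LD'' \<subseteq> LD' \<and> dominating Pts Lns I PD'' LD'' \<and>
              dsize PD'' LD'' < dsize PD LD))"

end

theory Submission imports Defs begin

context
  fixes Pts :: "'p set" and Lns :: "'l set" and I :: "'p \<Rightarrow> 'l \<Rightarrow> bool" and q :: nat
  assumes plane: "proj_plane Pts Lns I q"
begin

lemma join_unique:
  assumes "A \<in> Pts" "B \<in> Pts" "A \<noteq> B" "k \<in> Lns" "I A k" "I B k" "k' \<in> Lns" "I A k'" "I B k'"
  shows "k = k'"
proof -
  have "\<exists>!l. l\<in>Lns \<and> I A l \<and> I B l" using plane assms(1-3) unfolding proj_plane_def by blast
  thus ?thesis using assms by blast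
qed

lemma join_ex:
  assumes "A \<in> Pts" "B \<in> Pts" "A \<noteq> B"
  shows "\<exists>k\<in>Lns. I A k \<and> I B k"
proof -
  have "\<exists>!l. l\<in>Lns \<and> I A l \<and> I B l" using plane assms(1-3) unfolding proj_plane_def by blast
  thus ?thesis by blast
qed

lemma meet_ex:
  assumes "k \<in> Lns" "k' \<in> Lns" "k \<noteq> k'"
  shows "\<exists>A\<in>Pts. I A k \<and> I A k'"
proof -
  have "\<exists>!A. A\<in>Pts \<and> I A k \<and> I A k'" using plane assms unfolding proj_plane_def by blast
  thus ?thesis by blast
qed

lemma line_card:
  assumes "k \<in> Lns"
  shows "finite (points_on Pts I k) \<and> card (points_on Pts I k) = q + 1"
  using plane assms unfolding proj_plane_def points_on_def by blast

lemma other_point: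
  assumes "k \<in> Lns" "q \<ge> 1"
  shows "\<exists>B\<in>Pts. I B k \<and> B \<noteq> A"
proof -
  have f: "finite (points_on Pts I k)" and c: "card (points_on Pts I k) = q + 1"
    using line_card[OF assms(1)] by auto
  have "card (points_on Pts I k - {A}) \<ge> q" using c card_Diff_singleton_if[of "points_on Pts I k" A] f
    by (auto split: if_splits)
  hence "points_on Pts I k - {A} \<noteq> {}" using assms(2) by (metis card.empty le_zero_eq not_one_le_zero)
  thus ?thesis unfolding points_on_def by auto
qed

lemma pencil_sub:
  assumes "P \<in> Pts" "n \<in> Lns" "\<not> I P n"
  shows "pencil Lns I P \<subseteq> (\<lambda>w. SOME k. k\<in>Lns \<and> I P k \<and> I w k) ` points_on Pts I n"
proof
  fix k assume k: "k \<in> pencil Lns I P"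
  hence kL: "k \<in> Lns" "I P k" unfolding pencil_def by auto
  hence "k \<noteq> n" using assms by auto
  then obtain w where w: "w \<in> Pts" "I w k" "I w n" using meet_ex[OF kL(1) assms(2)] by auto
  have wP: "w \<noteq> P" using w assms by auto
  define k' where "k' = (SOME k. k\<in>Lns \<and> I P k \<and> I w k)"
  have "k'\<in>Lns \<and> I P k' \<and> I w k'" unfolding k'_def
    by (rule someI_ex) (use kL w in blast)
  hence "k' = k" using join_unique[of P w k' k] assms(1) w wP kL by auto
  thus "k \<in> (\<lambda>w. SOME k. k\<in>Lns \<and> I P k \<and> I w k) ` points_on Pts I n"
    using w unfolding points_on_def k'_def by auto
qed

lemma pencil_fin:
  assumes "P \<in> Pts" "n \<in> Lns" "\<not> I P n"
  shows "finite (pencil Lns I P) \<and> card (pencil Lns I P) \<le> q + 1"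
proof -
  have f: "finite (points_on Pts I n)" "card (points_on Pts I n) = q + 1" using line_card[OF assms(2)] by auto
  let ?g = "\<lambda>w. SOME k. k\<in>Lns \<and> I P k \<and> I w k"
  have sub: "pencil Lns I P \<subseteq> ?g ` points_on Pts I n" by (rule pencil_sub[OF assms])
  have fi: "finite (?g ` points_on Pts I n)" using f(1) by simp
  have "card (pencil Lns I P) \<le> card (?g ` points_on Pts I n)" by (rule card_mono[OF fi sub])
  also have "\<dots> \<le> card (points_on Pts I n)" by (rule card_image_le[OF f(1)])
  finally show ?thesis using finite_subset[OF sub fi] f(2) by simp
qed

lemma pts_fin:
  assumes "P \<in> Pts" "n \<in> Lns" "\<not> I P n"
  shows "finite Pts"
proof -
  have "Pts \<subseteq> insert P (\<Union> (points_on Pts I ` pencil Lns I P))"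
  proof
    fix w assume w: "w \<in> Pts"
    show "w \<in> insert P (\<Union> (points_on Pts I ` pencil Lns I P))"
    proof (cases "w = P")
      case False
      then obtain k where "k \<in> Lns" "I P k" "I w k" using join_ex[OF assms(1) w] by auto
      thus ?thesis using w unfolding pencil_def points_on_def by auto
    qed auto
  qed
  moreover have "finite (insert P (\<Union> (points_on Pts I ` pencil Lns I P)))"
    using pencil_fin[OF assms] line_card unfolding pencil_def by auto
  ultimately show ?thesis by (rule finite_subset)
qed

lemma lns_fin:
  assumes "finite Pts" "q \<ge> 1"
  shows "finite Lns"
proof -
  have "Lns \<subseteq> (\<lambda>(A,B). SOME k. k\<in>Lns \<and> I A k \<and> I B k) ` {(A,B). A\<in>Pts \<and> B\<in>Pts \<and> A\<noteq>B}"
  proof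
    fix k assume k: "k \<in> Lns"
    have "points_on Pts I k \<noteq> {}" using line_card[OF k] by auto
    then obtain A where A: "A \<in> Pts" "I A k" unfolding points_on_def by auto
    obtain B where B: "B \<in> Pts" "I B k" "B \<noteq> A" using other_point[OF k assms(2)] by auto
    define k' where "k' = (SOME k. k\<in>Lns \<and> I A k \<and> I B k)"
    have "k'\<in>Lns \<and> I A k' \<and> I B k'" unfolding k'_def
      by (rule someI_ex) (use k A B in blast)
    hence "k' = k" using join_unique[of A B k' k] A B k by auto
    thus "k \<in> (\<lambda>(A,B). SOME k. k\<in>Lns \<and> I A k \<and> I B k) ` {(A,B). A\<in>Pts \<and> B\<in>Pts \<and> A\<noteq>B}"
      using A B unfolding k'_def by (auto intro!: image_eqI[of _ _ "(A,B)"])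
  qed
  moreover have "finite {(A,B). A\<in>Pts \<and> B\<in>Pts \<and> A\<noteq>B}"
    by (rule finite_subset[of _ "Pts \<times> Pts"]) (use assms(1) in auto)
  ultimately show ?thesis by (meson finite_imageI finite_subset)
qed

end

theorem lemma1:
  fixes Pts :: "'p set" and Lns :: "'l set" and I :: "'p \<Rightarrow> 'l \<Rightarrow> bool" and q :: nat
    and PD :: "'p set" and LD :: "'l set" and P :: 'p and l :: 'l
  assumes plane: "proj_plane Pts Lns I q"
    and mindom: "minimal_dominating Pts Lns I PD LD"
    and small: "dsize PD LD < 3 * q - 1"
    and P: "P \<in> Pts"
    and cardP: "card (pencil Lns I P \<inter> LD) = q"
    and l: "l \<in> pencil Lns I P - LD"
  shows "LD = pencil Lns I P - {l} \<and> PD = points_on Pts I l - {P} \<and>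
         dsize PD LD = 2 * q \<and> stable_dominating Pts Lns I PD LD"
proof -
  note JU = join_unique[OF plane]
  have q1: "q \<ge> 1" using small unfolding dsize_def by (cases q) auto
  define A where "A = pencil Lns I P - {l}"
  define X where "X = points_on Pts I l - {P}"
  have lL: "l \<in> Lns" "I P l" "l \<notin> LD" using l unfolding pencil_def by auto
  have dom: "dominating Pts Lns I PD LD" using mindom unfolding minimal_dominating_def by auto
  hence PDs: "PD \<subseteq> Pts" and LDs: "LD \<subseteq> Lns" unfolding dominating_def by auto
  have "pencil Lns I P \<inter> LD \<noteq> {}" using cardP q1 by (metis card.empty not_one_le_zero)
  then obtain m where m: "m \<in> Lns" "I P m" "m \<in> LD" unfolding pencil_def by auto
  have ml: "m \<noteq> l" using m lL by auto
  obtain z where z: "z \<in> Pts" "I z m" "z \<noteq> P" using other_point[OF plane m(1) q1] by auto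
  obtain y where y: "y \<in> Pts" "I y l" "y \<noteq> P" using other_point[OF plane lL(1) q1] by auto
  have zl: "\<not> I z l" using JU[of P z m l] P z m lL ml by auto
  have yz: "y \<noteq> z" using zl y by auto
  obtain n where n: "n \<in> Lns" "I y n" "I z n" using join_ex[OF plane y(1) z(1) yz] by auto
  have Pn: "\<not> I P n" using JU[of P y n l] P y n lL zl by auto
  have finPts: "finite Pts" by (rule pts_fin[OF plane P n(1) Pn])
  have finLns: "finite Lns" by (rule lns_fin[OF plane finPts q1])
  have penc: "finite (pencil Lns I P)" "card (pencil Lns I P) \<le> q + 1"
    using pencil_fin[OF plane P n(1) Pn] by auto
  have finA: "finite A" using penc unfolding A_def by auto
  have cA: "card A \<le> q" using penc l unfolding A_def by auto
  have sub1: "pencil Lns I P \<inter> LD \<subseteq> A" using lL unfolding A_def by auto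
  have "card (pencil Lns I P \<inter> LD) = card A" using card_mono[OF finA sub1] cA cardP by auto
  hence LDP: "pencil Lns I P \<inter> LD = A" using card_subset_eq[OF finA sub1] by auto
  have cardA: "card A = q" using LDP cardP by simp
  have AsubLD: "A \<subseteq> LD" using LDP by auto
  have Ad: "\<And>k. k \<in> A \<longleftrightarrow> k \<in> Lns \<and> I P k \<and> k \<noteq> l" unfolding A_def pencil_def by auto
  have mA: "m \<in> A" using m ml Ad by auto
  have finPD: "finite PD" using finite_subset[OF PDs finPts] .
  have finLD: "finite LD" using finite_subset[OF LDs finLns] .
  have lc: "finite (points_on Pts I l)" "card (points_on Pts I l) = q + 1" using line_card[OF plane lL(1)] by auto
  have finX: "finite X" using lc unfolding X_def by auto
  have cardX: "card X = q" using lc P lL unfolding X_def points_on_def by auto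
  have Xd: "\<And>x. x \<in> X \<longleftrightarrow> x \<in> Pts \<and> I x l \<and> x \<noteq> P" unfolding X_def points_on_def by auto
  have onX: "\<And>x k. x \<in> X \<Longrightarrow> k \<in> Lns \<Longrightarrow> I x k \<Longrightarrow> I P k \<Longrightarrow> k = l"
  proof -
    fix x k assume a: "x \<in> X" "k \<in> Lns" "I x k" "I P k"
    have "x \<in> Pts" "I x l" "x \<noteq> P" using a(1) Xd by auto
    thus "k = l" using JU[of P x k l] P a lL by auto
  qed
  have XPD: "X \<subseteq> PD"
  proof (rule ccontr)
    assume "\<not> X \<subseteq> PD"
    then obtain y0 where y0: "y0 \<in> X" "y0 \<notin> PD" by auto
    have y0': "y0 \<in> Pts" "I y0 l" "y0 \<noteq> P" using y0 Xd by auto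
    define M where "M = points_on Pts I m - {P}"
    define X' where "X' = X - {y0}"
    define kk where "kk = (\<lambda>w. SOME k. k\<in>Lns \<and> I y0 k \<and> I w k)"
    have Md: "\<And>w. w \<in> M \<longleftrightarrow> w \<in> Pts \<and> I w m \<and> w \<noteq> P" unfolding M_def points_on_def by auto
    have Ml: "\<And>w. w \<in> M \<Longrightarrow> \<not> I w l"
    proof
      fix w assume w: "w \<in> M" "I w l"
      have "w \<in> Pts" "I w m" "w \<noteq> P" using w(1) Md by auto
      thus False using JU[of P w m l] P m lL ml w(2) by auto
    qed
    have kk: "\<And>w. w \<in> M \<Longrightarrow> kk w \<in> Lns \<and> I y0 (kk w) \<and> I w (kk w)"
    proof -
      fix w assume w: "w \<in> M"
      have "w \<noteq> y0" using Ml w y0' by auto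
      then have "\<exists>k. k\<in>Lns \<and> I y0 k \<and> I w k" using join_ex[OF plane y0'(1), of w] w Md by auto
      thus "kk w \<in> Lns \<and> I y0 (kk w) \<and> I w (kk w)" unfolding kk_def by (rule someI_ex)
    qed
    have kkl: "\<And>w. w \<in> M \<Longrightarrow> kk w \<noteq> l"
    proof
      fix w assume w: "w \<in> M" "kk w = l"
      show False using kk[OF w(1)] Ml[OF w(1)] w(2) by simp
    qed
    have kkP: "\<And>w. w \<in> M \<Longrightarrow> \<not> I P (kk w)"
    proof
      fix w assume w: "w \<in> M" "I P (kk w)"
      have "kk w = l" using onX[OF y0(1), of "kk w"] kk[OF w(1)] w(2) by simp
      thus False using kkl[OF w(1)] by simp
    qed
    define T where "T = ((Inl ` PD \<union> Inr ` (LD - A)) :: ('p + 'l) set)"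
    define uu where "uu = (\<lambda>w. SOME u. u \<in> PD \<and> I u (kk w))"
    have uu: "\<And>w. w \<in> M \<Longrightarrow> kk w \<notin> LD \<Longrightarrow> uu w \<in> PD \<and> I (uu w) (kk w)"
    proof -
      fix w assume w: "w \<in> M" "kk w \<notin> LD"
      have "\<exists>u\<in>PD. I u (kk w)" using dom kk[OF w(1)] w(2) unfolding dominating_def by auto
      thus "uu w \<in> PD \<and> I (uu w) (kk w)" unfolding uu_def by (metis (mono_tags, lifting) someI_ex)
    qed
    have uul: "\<And>w. w \<in> M \<Longrightarrow> kk w \<notin> LD \<Longrightarrow> \<not> I (uu w) l"
    proof
      fix w assume w: "w \<in> M" "kk w \<notin> LD" "I (uu w) l"
      have "uu w \<noteq> y0" using uu[OF w(1,2)] y0 by auto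
      thus False using JU[of "uu w" y0 "kk w" l] uu[OF w(1,2)] kk[OF w(1)] w(3) y0' lL kkl[OF w(1)] PDs by auto
    qed
    define vv where "vv = (\<lambda>x. SOME v. v \<in> LD \<and> I x v)"
    have vv: "\<And>x. x \<in> X' \<Longrightarrow> x \<notin> PD \<Longrightarrow> vv x \<in> LD \<and> I x (vv x)"
    proof -
      fix x assume x: "x \<in> X'" "x \<notin> PD"
      have "\<exists>v\<in>LD. I x v" using dom x Xd unfolding dominating_def X'_def by auto
      thus "vv x \<in> LD \<and> I x (vv x)" unfolding vv_def by (metis (mono_tags, lifting) someI_ex)
    qed
    have vvA: "\<And>x. x \<in> X' \<Longrightarrow> x \<notin> PD \<Longrightarrow> vv x \<notin> A"
    proof
      fix x assume x: "x \<in> X'" "x \<notin> PD" "vv x \<in> A"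
      have "x \<in> X" using x(1) unfolding X'_def by simp
      hence "vv x = l" using onX[of x "vv x"] vv[OF x(1,2)] x(3) Ad by simp
      thus False using vv[OF x(1,2)] lL by simp
    qed
    define f1 where "f1 = (\<lambda>w. if kk w \<in> LD then Inr (kk w) else (Inl (uu w) :: 'p + 'l))"
    define f2 where "f2 = (\<lambda>x. if x \<in> PD then Inl x else (Inr (vv x) :: 'p + 'l))"
    have f1T: "f1 ` M \<subseteq> T"
    proof
      fix e assume "e \<in> f1 ` M"
      then obtain w where w: "w \<in> M" "e = f1 w" by auto
      show "e \<in> T"
      proof (cases "kk w \<in> LD")
        case True
        hence "kk w \<notin> A" using kkP[OF w(1)] Ad by auto
        thus ?thesis using True w unfolding f1_def T_def by auto
      next
        case False
        thus ?thesis using uu[OF w(1) False] w unfolding f1_def T_def by auto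
      qed
    qed
    have f2T: "f2 ` X' \<subseteq> T"
    proof
      fix e assume "e \<in> f2 ` X'"
      then obtain x where x: "x \<in> X'" "e = f2 x" by auto
      show "e \<in> T"
      proof (cases "x \<in> PD")
        case True
        thus ?thesis using x unfolding f2_def T_def by auto
      next
        case False
        thus ?thesis using vv[OF x(1) False] vvA[OF x(1) False] x unfolding f2_def T_def by auto
      qed
    qed
    have kkinj: "\<And>w1 w2. w1 \<in> M \<Longrightarrow> w2 \<in> M \<Longrightarrow> kk w1 = kk w2 \<Longrightarrow> w1 = w2"
    proof (rule ccontr)
      fix w1 w2 assume w: "w1 \<in> M" "w2 \<in> M" "kk w1 = kk w2" "w1 \<noteq> w2"
      have "kk w1 = m" using JU[of w1 w2 "kk w1" m] w kk[OF w(1)] kk[OF w(2)] Md m by auto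
      hence "I y0 m" using kk[OF w(1)] by auto
      hence "m = l" using onX[OF y0(1) m(1)] m by auto
      thus False using ml by auto
    qed
    have inj1: "inj_on f1 M"
    proof (rule inj_onI)
      fix w1 w2 assume w: "w1 \<in> M" "w2 \<in> M" "f1 w1 = f1 w2"
      have "kk w1 = kk w2"
      proof (cases "kk w1 \<in> LD"; cases "kk w2 \<in> LD")
        assume a: "kk w1 \<notin> LD" "kk w2 \<notin> LD"
        hence e: "uu w1 = uu w2" using w(3) unfolding f1_def by auto
        have "uu w1 \<noteq> y0" using uu[OF w(1) a(1)] y0 by auto
        thus ?thesis using JU[of "uu w1" y0 "kk w1" "kk w2"] uu[OF w(1) a(1)] uu[OF w(2) a(2)] e
            kk[OF w(1)] kk[OF w(2)] y0' PDs by auto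
      qed (use w(3) in \<open>auto simp: f1_def\<close>)
      thus "w1 = w2" using kkinj w by auto
    qed
    have inj2: "inj_on f2 X'"
    proof (rule inj_onI)
      fix x1 x2 assume x: "x1 \<in> X'" "x2 \<in> X'" "f2 x1 = f2 x2"
      show "x1 = x2"
      proof (cases "x1 \<in> PD"; cases "x2 \<in> PD")
        assume a: "x1 \<notin> PD" "x2 \<notin> PD"
        hence e: "vv x1 = vv x2" using x(3) unfolding f2_def by auto
        show ?thesis
        proof (rule ccontr)
          assume "x1 \<noteq> x2"
          hence "vv x1 = l" using JU[of x1 x2 "vv x1" l] vv[OF x(1) a(1)] vv[OF x(2) a(2)] e x(1,2)
              Xd lL LDs unfolding X'_def by auto
          thus False using vv[OF x(1) a(1)] lL by auto
        qed
      qed (use x(3) in \<open>auto simp: f2_def\<close>)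
    qed
    have disj: "f1 ` M \<inter> f2 ` X' = {}"
    proof (rule ccontr)
      assume "f1 ` M \<inter> f2 ` X' \<noteq> {}"
      then obtain w x where wx: "w \<in> M" "x \<in> X'" "f1 w = f2 x" by auto
      show False
      proof (cases "kk w \<in> LD"; cases "x \<in> PD")
        assume a: "kk w \<in> LD" "x \<notin> PD"
        hence e: "kk w = vv x" using wx(3) unfolding f1_def f2_def by auto
        have "x \<noteq> y0" using wx(2) unfolding X'_def by auto
        hence "kk w = l" using JU[of x y0 "kk w" l] vv[OF wx(2) a(2)] e kk[OF wx(1)] wx(2) y0' lL
          Xd unfolding X'_def by auto
        thus False using kkl[OF wx(1)] by auto
      next
        assume a: "kk w \<notin> LD" "x \<in> PD"
        hence e: "uu w = x" using wx(3) unfolding f1_def f2_def by auto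
        thus False using uul[OF wx(1) a(1)] wx(2) Xd unfolding X'_def by auto
      qed (use wx(3) in \<open>auto simp: f1_def f2_def\<close>)
    qed
    have mc: "finite (points_on Pts I m)" "card (points_on Pts I m) = q + 1" using line_card[OF plane m(1)] by auto
    have cM: "card M = q" using mc P m unfolding M_def points_on_def by auto
    have cX': "card X' = q - 1" using cardX y0 finX unfolding X'_def by auto
    have finM: "finite M" using mc unfolding M_def by auto
    have finX': "finite X'" using finX unfolding X'_def by auto
    have "card (f1 ` M \<union> f2 ` X') = card (f1 ` M) + card (f2 ` X')"
      using disj finM finX' by (simp add: card_Un_disjoint)
    also have "\<dots> = q + (q - 1)" using card_image[OF inj1] card_image[OF inj2] cM cX' by simp
    finally have c1: "card (f1 ` M \<union> f2 ` X') = q + (q - 1)" .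
    have finT: "finite T" using finPD finLD unfolding T_def by auto
    have cT0: "card T = card ((Inl ` PD) :: ('p + 'l) set) + card ((Inr ` (LD - A)) :: ('p + 'l) set)"
      unfolding T_def by (rule card_Un_disjoint) (use finPD finLD in auto)
    have cT1: "card ((Inl ` PD) :: ('p + 'l) set) = card PD" by (rule card_image) (simp add: inj_on_def)
    have cT2: "card ((Inr ` (LD - A)) :: ('p + 'l) set) = card (LD - A)" by (rule card_image) (simp add: inj_on_def)
    have cLA: "card (LD - A) = card LD - q" using AsubLD finA cardA by (simp add: card_Diff_subset)
    have "card (f1 ` M \<union> f2 ` X') \<le> card T" using f1T f2T finT by (simp add: card_mono)
    hence "q + (q - 1) \<le> card PD + (card LD - q)" using c1 cT0 cT1 cT2 cLA by linarith
    moreover have "card LD \<ge> q" using card_mono[OF finLD AsubLD] cardA by simp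
    ultimately show False using small unfolding dsize_def by simp
  qed
  have domXA: "dominating Pts Lns I X A"
    unfolding dominating_def
  proof (intro conjI ballI)
    show "X \<subseteq> Pts" using Xd by auto
    show "A \<subseteq> Lns" using Ad by auto
  next
    fix w assume w: "w \<in> Pts - X"
    show "\<exists>k\<in>A. I w k"
    proof (cases "w = P")
      case True thus ?thesis using mA m by auto
    next
      case False
      then obtain k where k: "k \<in> Lns" "I P k" "I w k" using join_ex[OF plane P, of w] w by auto
      have "k \<noteq> l" using k w False Xd by auto
      thus ?thesis using k Ad by auto
    qed
  next
    fix k assume k: "k \<in> Lns - A"
    show "\<exists>x\<in>X. I x k"
    proof (cases "I P k")
      case True
      hence "k = l" using k Ad by auto
      thus ?thesis using y Xd by auto
    next
      case False
      hence "k \<noteq> l" using lL by auto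
      then obtain w where w: "w \<in> Pts" "I w k" "I w l" using meet_ex[OF plane _ lL(1)] k by auto
      hence "w \<in> X" using False Xd by auto
      thus ?thesis using w by auto
    qed
  qed
  have eq: "PD = X \<and> LD = A"
    using mindom XPD AsubLD domXA unfolding minimal_dominating_def by blast
  have ds: "dsize PD LD = 2 * q" using eq cardX cardA unfolding dsize_def by simp
  have q2: "q \<ge> 2" using ds small by simp
  have stab: "stable_dominating Pts Lns I PD LD"
    unfolding stable_dominating_def
  proof (intro conjI notI)
    show "minimal_dominating Pts Lns I PD LD" by (rule mindom)
  next
    assume "\<exists>PD' LD'. dominating Pts Lns I PD' LD' \<and> PD \<subseteq> PD' \<and> LD \<subseteq> LD' \<and> (PD', LD') \<noteq> (PD, LD) \<and>
          dsize PD' LD' = dsize PD LD + 1 \<and>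
          (\<exists>PD'' LD''. PD'' \<subseteq> PD' \<and> LD'' \<subseteq> LD' \<and> dominating Pts Lns I PD'' LD'' \<and>
              dsize PD'' LD'' < dsize PD LD)"
    then obtain PD' LD' PD'' LD'' where D': "dominating Pts Lns I PD' LD'" "X \<subseteq> PD'" "A \<subseteq> LD'"
      "dsize PD' LD' = 2 * q + 1" "PD'' \<subseteq> PD'" "LD'' \<subseteq> LD'" "dominating Pts Lns I PD'' LD''"
      "dsize PD'' LD'' < 2 * q" using eq ds by auto
    have PD's: "PD' \<subseteq> Pts" "LD' \<subseteq> Lns" using D'(1) unfolding dominating_def by auto
    have f1': "finite PD'" using finite_subset[OF PD's(1) finPts] .
    have f2': "finite LD'" using finite_subset[OF PD's(2) finLns] .
    have fin': "finite PD'" "finite LD'" "finite PD''" "finite LD''"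
      using f1' f2' finite_subset[OF D'(5) f1'] finite_subset[OF D'(6) f2'] by auto
    have c': "card PD' = q + card (PD' - X)" "card LD' = q + card (LD' - A)"
      using card_Diff_subset[OF finX D'(2)] card_Diff_subset[OF finA D'(3)] card_mono[OF fin'(1) D'(2)]
        card_mono[OF fin'(2) D'(3)] cardX cardA by auto
    have one: "card (PD' - X) + card (LD' - A) = 1" using c' D'(4) unfolding dsize_def by simp
    have dom'': "\<forall>w\<in>Pts - PD''. \<exists>k\<in>LD''. I w k" "\<forall>k\<in>Lns - LD''. \<exists>w\<in>PD''. I w k"
      using D'(7) unfolding dominating_def by auto
    have AL: "A \<subseteq> LD''"
    proof
      fix k assume kA: "k \<in> A"
      show "k \<in> LD''"
      proof (rule ccontr)
        assume kn: "k \<notin> LD''"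
        have kk: "k \<in> Lns" "I P k" "k \<noteq> l" using kA Ad by auto
        obtain u1 where u1: "u1 \<in> Pts" "I u1 k" "u1 \<noteq> P" using other_point[OF plane kk(1) q1] by auto
        have kc: "finite (points_on Pts I k)" "card (points_on Pts I k) = q + 1" using line_card[OF plane kk(1)] by auto
        have "card (points_on Pts I k - {P, u1}) = q - 1"
          using kc u1 P kk card_Diff_subset[of "{P,u1}" "points_on Pts I k"] unfolding points_on_def by auto
        hence "points_on Pts I k - {P, u1} \<noteq> {}"
        proof (intro notI)
          assume c: "card (points_on Pts I k - {P, u1}) = q - 1" and e: "points_on Pts I k - {P, u1} = {}"
          have "card (points_on Pts I k - {P, u1}) = 0" unfolding e by simp
          thus False using c q2 by simp
        qed
        then obtain u2' where u2': "u2' \<in> points_on Pts I k - {P, u1}" by blast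
        hence u2': "u2' \<in> Pts" "I u2' k" "u2' \<noteq> P" "u2' \<noteq> u1" unfolding points_on_def by auto
        have gen: "\<And>u. u \<in> Pts \<Longrightarrow> I u k \<Longrightarrow> u \<noteq> P \<Longrightarrow> u \<in> PD' - X \<or> (\<exists>v. v \<in> LD' - A \<and> I u v \<and> v \<noteq> k)"
        proof -
          fix u assume u: "u \<in> Pts" "I u k" "u \<noteq> P"
          have uX: "u \<notin> X" using JU[of P u k l] u P kk lL Xd by auto
          show "u \<in> PD' - X \<or> (\<exists>v. v \<in> LD' - A \<and> I u v \<and> v \<noteq> k)"
          proof (cases "u \<in> PD''")
            case True thus ?thesis using D'(5) uX by auto
          next
            case False
            then obtain v where v: "v \<in> LD''" "I u v" using dom''(1) u by auto
            have "v \<noteq> k" using v kn by auto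
            moreover have "v \<notin> A" using JU[of P u k v] u P kk Ad \<open>v \<noteq> k\<close> v by auto
            ultimately show ?thesis using v D'(6) by auto
          qed
        qed
        have g1: "u1 \<in> PD' - X \<or> (\<exists>v. v \<in> LD' - A \<and> I u1 v \<and> v \<noteq> k)" using gen u1 by auto
        have g2: "u2' \<in> PD' - X \<or> (\<exists>v. v \<in> LD' - A \<and> I u2' v \<and> v \<noteq> k)" using gen u2' by auto
        have finR: "finite (PD' - X)" "finite (LD' - A)" using fin' by auto
        show False
        proof (cases "card (PD' - X) = 1")
          case True
          hence "LD' - A = {}" using one finR by auto
          moreover obtain a where "PD' - X = {a}" using True by (erule card_1_singletonE)
          ultimately show False using g1 g2 u2' by auto
        next
          case False
          hence c0: "card (PD' - X) = 0" using one by simp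
          hence "PD' - X = {}" using finR by simp
          moreover have "card (LD' - A) = 1" using one False by simp
          then obtain v where "LD' - A = {v}" by (erule card_1_singletonE)
          ultimately have "I u1 v" "I u2' v" "v \<noteq> k" "v \<in> Lns" using g1 g2 PD's by auto
          thus False using JU[of u1 u2' v k] u1 u2' kk by auto
        qed
      qed
    qed
    have cL: "card LD'' \<ge> q" using card_mono[OF fin'(4) AL] cardA by simp
    have cP: "card PD'' \<le> q - 1" using cL D'(8) unfolding dsize_def by simp
    have "\<not> X \<subseteq> PD''"
    proof
      assume "X \<subseteq> PD''"
      hence "card X \<le> card PD''" using card_mono fin'(3) by auto
      thus False using cP cardX q1 by simp
    qed
    then obtain x1 where x1: "x1 \<in> X" "x1 \<notin> PD''" by auto
    have covX: "\<And>x. x \<in> X \<Longrightarrow> x \<notin> PD'' \<Longrightarrow> \<exists>v. v \<in> LD'' - A \<and> I x v"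
    proof -
      fix x assume x: "x \<in> X" "x \<notin> PD''"
      then obtain v where v: "v \<in> LD''" "I x v" using dom''(1) Xd by auto
      have "v \<notin> A" using onX[OF x(1)] v Ad by auto
      thus "\<exists>v. v \<in> LD'' - A \<and> I x v" using v by auto
    qed
    obtain v1 where v1: "v1 \<in> LD'' - A" "I x1 v1" using covX[OF x1] by auto
    have "v1 \<in> LD' - A" using v1 D'(6) by auto
    hence nz: "card (LD' - A) \<noteq> 0" using fin' by auto
    have c10: "card (PD' - X) = 0" "card (LD' - A) = 1" using one nz by linarith+
    have "PD' - X = {}" using c10(1) fin' by simp
    obtain vv where "LD' - A = {vv}" using c10(2) by (erule card_1_singletonE)
    hence LD'e: "LD' - A = {v1}" using \<open>v1 \<in> LD' - A\<close> by auto
    have PD''X: "PD'' \<subseteq> X" using \<open>PD' - X = {}\<close> D'(5) by auto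
    have "insert v1 A \<subseteq> LD''" using AL v1 by auto
    hence "card (insert v1 A) \<le> card LD''" by (rule card_mono[OF fin'(4)])
    hence "card LD'' \<ge> q + 1" using v1 finA cardA by simp
    hence cP2: "card PD'' \<le> q - 2" using D'(8) unfolding dsize_def by simp
    have "card X = card (X \<inter> PD'') + card (X - PD'')" using card_Int_Diff[OF finX] by simp
    moreover have "card (X \<inter> PD'') \<le> q - 2" using cP2 card_mono[OF fin'(3)] by (meson Int_lower2 order_trans)
    ultimately have cXP: "card (X - PD'') \<ge> 2" using cardX q2 by linarith
    have "card (X - PD'' - {x1}) = card (X - PD'') - 1" using x1 finX by (simp add: card_Diff_singleton)
    hence "card (X - PD'' - {x1}) \<ge> 1" using cXP by linarith
    hence "X - PD'' - {x1} \<noteq> {}" by (intro notI) simp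
    then obtain x2 where x2: "x2 \<in> X" "x2 \<notin> PD''" "x2 \<noteq> x1" by auto
    obtain v2 where v2: "v2 \<in> LD'' - A" "I x2 v2" using covX[OF x2(1,2)] by auto
    have "v2 = v1" using v2 D'(6) LD'e by auto
    hence v1l: "v1 = l" using JU[of x1 x2 v1 l] x1 x2 v1 v2 Xd lL D'(6) PD's(2) by auto
    obtain h where h: "h \<in> Lns" "I x1 h" "I z h" using join_ex[OF plane _ z(1), of x1] x1 Xd zl by auto
    have hl: "h \<noteq> l" using h zl by auto
    have hA: "h \<notin> A" using onX[OF x1(1) h(1,2)] hl Ad by auto
    have "h \<notin> LD''" using hA hl D'(6) LD'e v1l by auto
    then obtain w where w: "w \<in> PD''" "I w h" using dom''(2) h by auto
    have "w \<noteq> x1" using w x1 by auto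
    hence "h = l" using JU[of w x1 h l] w h PD''X Xd lL x1 by auto
    thus False using hl by auto
  qed
  show ?thesis using eq ds stab unfolding A_def X_def by auto
qed

end
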